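(* Let $\mathcal G$ be a class of graphs that is closed under taking blowups and is $\chi$-bounded with $\chi$-bounding function $g(n) = c\cdot n$ for some $c\in \mathbb R$ (that is, every induced subgraph $H$ of a graph in $\mathcal G$ satisfies $\chi(H)\leq c\,\omega(H)$). Then $\mathcal G$ is local-fractionally $\chi$-bounded by $g$: for every $G\in\mathcal G$, every induced subgraph $H$ of $G$, and every demand function $f$ for $H$ with $f(v)\leq 1/g(\omega(v))$ for each $v\in V(H)$, the graph $H$ has an $f$-coloring.
   Context: $\omega(v)$ denotes the size of a largest clique in $H[N[v]]$, where $N[v]$ is the closed neighborhood of $v$. A blowup of a graph $F$ is obtained by replacing vertices $x$ by pairwise disjoint cliques $Q_x$ and making every vertex of $Q_x$ adjacent to every vertex of $Q_y$ whenever $xy\in E(F)$. A demand function for $H$ is a function $f: V(H)\to [0,1]\cap\mathbb{Q}$. A fractional coloring of $H$ assigns to each vertex a measurable subset of $[0,1]$ so that adjacent vertices receive disjoint sets; an $f$-coloring is a fractional coloring $\phi$ with Lebesgue measure of $\phi(v)$ at least $f(v)$ for every $v$. *)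

theory Defs
  imports "HOL-Analysis.Analysis"
begin

definition is_graph :: "nat set \<Rightarrow> (nat \<times> nat) set \<Rightarrow> bool" where
  "is_graph V E \<longleftrightarrow> finite V \<and> E \<subseteq> V \<times> V \<and> sym E \<and> irrefl E"

definition induced_edges :: "(nat \<times> nat) set \<Rightarrow> nat set \<Rightarrow> (nat \<times> nat) set" where
  "induced_edges E S = E \<inter> (S \<times> S)"

definition is_clique :: "(nat \<times> nat) set \<Rightarrow> nat set \<Rightarrow> bool" where
  "is_clique E K \<longleftrightarrow> (\<forall>u\<in>K. \<forall>w\<in>K. u \<noteq> w \<longrightarrow> (u, w) \<in> E)"

definition clique_number :: "nat set \<Rightarrow> (nat \<times> nat) set \<Rightarrow> nat" where
  "clique_number V E = Max {card K | K. K \<subseteq> V \<and> is_clique E K}"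

definition chromatic_number :: "nat set \<Rightarrow> (nat \<times> nat) set \<Rightarrow> nat" where
  "chromatic_number V E = (LEAST k. \<exists>col :: nat \<Rightarrow> nat.
      (\<forall>v\<in>V. col v < k) \<and> (\<forall>u\<in>V. \<forall>w\<in>V. (u, w) \<in> E \<longrightarrow> col u \<noteq> col w))"

definition closed_nbhd :: "nat set \<Rightarrow> (nat \<times> nat) set \<Rightarrow> nat \<Rightarrow> nat set" where
  "closed_nbhd V E v = insert v {u \<in> V. (v, u) \<in> E}"

definition local_omega :: "nat set \<Rightarrow> (nat \<times> nat) set \<Rightarrow> nat \<Rightarrow> nat" where
  "local_omega V E v =
     clique_number (closed_nbhd V E v) (induced_edges E (closed_nbhd V E v))"

text \<open>(VB,EB) is (isomorphic to) a blowup of (VF,EF): there is a surjection p from VB onto VF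
  whose fibres are the (nonempty, pairwise disjoint) cliques Q_x, and two vertices in distinct
  fibres are adjacent iff their images are adjacent in F.\<close>
definition is_blowup :: "nat set \<Rightarrow> (nat \<times> nat) set \<Rightarrow> nat set \<Rightarrow> (nat \<times> nat) set \<Rightarrow> bool" where
  "is_blowup VF EF VB EB \<longleftrightarrow> (\<exists>p :: nat \<Rightarrow> nat. p ` VB = VF \<and>
     (\<forall>u\<in>VB. \<forall>w\<in>VB. u \<noteq> w \<longrightarrow> ((u, w) \<in> EB \<longleftrightarrow> (p u = p w \<or> (p u, p w) \<in> EF))))"

definition demand_function :: "nat set \<Rightarrow> (nat \<Rightarrow> real) \<Rightarrow> bool" where
  "demand_function S f \<longleftrightarrow> (\<forall>v\<in>S. f v \<in> \<rat> \<and> 0 \<le> f v \<and> f v \<le> 1)"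

definition f_coloring :: "nat set \<Rightarrow> (nat \<times> nat) set \<Rightarrow> (nat \<Rightarrow> real) \<Rightarrow> (nat \<Rightarrow> real set) \<Rightarrow> bool" where
  "f_coloring V E f \<phi> \<longleftrightarrow>
     (\<forall>v\<in>V. \<phi> v \<in> sets lebesgue \<and> \<phi> v \<subseteq> {0..1} \<and> measure lebesgue (\<phi> v) \<ge> f v) \<and>
     (\<forall>u\<in>V. \<forall>w\<in>V. (u, w) \<in> E \<longrightarrow> \<phi> u \<inter> \<phi> w = {})"

end

theory Submission
  imports Defs "HOL-Library.Nat_Bijection"
begin


definition ivl :: "nat \<Rightarrow> nat \<Rightarrow> real set" where
  "ivl k j = {real j / real k ..< (real j + 1) / real k}"

lemma ivl_disj: "k > 0 \<Longrightarrow> i \<noteq> j \<Longrightarrow> ivl k i \<inter> ivl k j = {}"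
proof (rule ccontr)
  assume k: "k > 0" and ij: "i \<noteq> j" and "ivl k i \<inter> ivl k j \<noteq> {}"
  then obtain x where x: "x \<in> ivl k i" "x \<in> ivl k j" by blast
  have "real i \<le> x * k" "x * k < real i + 1" "real j \<le> x * k" "x * k < real j + 1"
    using x k by (auto simp: ivl_def field_simps)
  then have "real i < real j + 1" "real j < real i + 1" by linarith+
  then show False using ij by linarith
qed

lemma ivl_union_meas:
  assumes k: "k > 0" and C: "finite C"
  shows "(\<Union>j\<in>C. ivl k j) \<in> sets lebesgue \<and> measure lebesgue (\<Union>j\<in>C. ivl k j) = real (card C) / real k"
proof -
  have sb: "(\<Union>j\<in>C. ivl k j) \<in> sets lborel"
    using C by (auto simp: ivl_def)
  have fin: "\<And>j. emeasure lborel (ivl k j) \<noteq> \<infinity>"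
    using k by (simp add: ivl_def divide_right_mono)
  have "measure lborel (\<Union>j\<in>C. ivl k j) = (\<Sum>j\<in>C. measure lborel (ivl k j))"
    using C ivl_disj[OF k] fin by (intro measure_finite_Union) (auto simp: ivl_def disjoint_family_on_def)
  also have "\<dots> = (\<Sum>j\<in>C. 1 / real k)"
    using k by (intro sum.cong) (auto simp: ivl_def field_simps divide_right_mono)
  finally show ?thesis using sb by simp
qed



lemma clique_fin: "finite W \<Longrightarrow> finite {card K | K. K \<subseteq> W \<and> is_clique F K}"
proof -
  assume "finite W"
  have "{card K | K. K \<subseteq> W \<and> is_clique F K} \<subseteq> card ` Pow W" by auto
  then show ?thesis using \<open>finite W\<close> finite_subset by blast
qed

lemma clique_ge: "finite W \<Longrightarrow> K \<subseteq> W \<Longrightarrow> is_clique F K \<Longrightarrow> card K \<le> clique_number W F"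
  unfolding clique_number_def by (rule Max_ge[OF clique_fin]) auto

lemma clique_le: "finite W \<Longrightarrow> (\<And>K. K \<subseteq> W \<Longrightarrow> is_clique F K \<Longrightarrow> card K \<le> m) \<Longrightarrow> clique_number W F \<le> m"
  unfolding clique_number_def
  by (subst Max_le_iff[OF clique_fin]) (auto simp: is_clique_def)

lemma clique_le_card: "finite W \<Longrightarrow> clique_number W F \<le> card W"
  by (rule clique_le) (auto intro: card_mono)



lemma local_omega_ge:
  assumes fS: "finite S" and KS: "K \<subseteq> S" and cl: "is_clique (induced_edges E S) K" and vK: "v \<in> K"
  shows "card K \<le> local_omega S (induced_edges E S) v"
proof -
  let ?N = "closed_nbhd S (induced_edges E S) v"
  have KN: "K \<subseteq> ?N" using KS cl vK by (auto simp: closed_nbhd_def is_clique_def)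
  have fN: "finite ?N" using fS vK KS by (auto simp: closed_nbhd_def)
  have "is_clique (induced_edges (induced_edges E S) ?N) K"
    using cl KN by (auto simp: is_clique_def induced_edges_def)
  then show ?thesis unfolding local_omega_def using clique_ge[OF fN KN] by blast
qed

lemma local_omega_bounds:
  assumes fS: "finite S" and vS: "v \<in> S"
  shows "1 \<le> local_omega S (induced_edges E S) v \<and> local_omega S (induced_edges E S) v \<le> card S"
proof
  show "1 \<le> local_omega S (induced_edges E S) v"
    using local_omega_ge[OF fS, of "{v}" E v] vS by (auto simp: is_clique_def)
  let ?N = "closed_nbhd S (induced_edges E S) v"
  have NS: "?N \<subseteq> S" using vS by (auto simp: closed_nbhd_def)
  have "local_omega S (induced_edges E S) v \<le> card ?N"
    unfolding local_omega_def by (rule clique_le_card) (use NS fS finite_subset in blast)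
  also have "\<dots> \<le> card S" using NS fS by (rule card_mono[rotated])
  finally show "local_omega S (induced_edges E S) v \<le> card S" .
qed



theorem theorem5p2:
  fixes \<G> :: "(nat set \<times> (nat \<times> nat) set) set" and c :: real
  assumes graphs: "\<And>V E. (V, E) \<in> \<G> \<Longrightarrow> is_graph V E"
    and blowup_closed: "\<And>V E VB EB. (V, E) \<in> \<G> \<Longrightarrow> is_graph VB EB \<Longrightarrow>
                          is_blowup V E VB EB \<Longrightarrow> (VB, EB) \<in> \<G>"
    and chi_bounded: "\<And>V E S. (V, E) \<in> \<G> \<Longrightarrow> S \<subseteq> V \<Longrightarrow>
         real (chromatic_number S (induced_edges E S))
           \<le> c * real (clique_number S (induced_edges E S))"
  shows "\<forall>V E S f. (V, E) \<in> \<G> \<longrightarrow> S \<subseteq> V \<longrightarrow> demand_function S f \<longrightarrow>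
           (\<forall>v\<in>S. f v \<le> 1 / (c * real (local_omega S (induced_edges E S) v))) \<longrightarrow>
           (\<exists>\<phi>. f_coloring S (induced_edges E S) f \<phi>)"
proof (intro allI impI)
  fix V E S f
  assume G: "(V, E) \<in> \<G>" and SV: "S \<subseteq> V" and dem: "demand_function S f"
    and fb: "\<forall>v\<in>S. f v \<le> 1 / (c * real (local_omega S (induced_edges E S) v))"
  show "\<exists>\<phi>. f_coloring S (induced_edges E S) f \<phi>"
  proof (cases "S = {}")
    case True
    then show ?thesis by (auto simp: f_coloring_def)
  next
    case Sne: False
    have gV: "is_graph V E" using graphs G .
    then have fV: "finite V" and EV: "E \<subseteq> V \<times> V" and symE: "sym E" and irrE: "irrefl E"
      by (auto simp: is_graph_def)
    have fS: "finite S" using fV SV finite_subset by blast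
    define ES where "ES = induced_edges E S"
    define om where "om = local_omega S ES"
    define M :: nat where "M = fact (card S)"
    define n where "n = (\<lambda>v. if v \<in> S then M div om v else 1)"
    have omb: "1 \<le> om v \<and> om v \<le> card S" if "v \<in> S" for v
      using local_omega_bounds[OF fS that] unfolding om_def ES_def by blast
    have nM: "n v * om v = M" if "v \<in> S" for v
    proof -
      have "om v dvd M" unfolding M_def using omb[OF that] by (intro dvd_fact) auto
      then show ?thesis using that by (simp add: n_def)
    qed
    have Mpos: "M > 0" by (simp add: M_def)
    have npos: "n v \<ge> 1" for v
    proof (cases "v \<in> S")
      case True
      then show ?thesis using nM[OF True] Mpos by (cases "n v") auto
    qed (simp add: n_def)
    define p where "p = (\<lambda>a::nat. fst (prod_decode a))"
    define enc where "enc = (\<lambda>v i. prod_encode (v, i))"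
    have penc[simp]: "p (enc v i) = v" for v i by (simp add: p_def enc_def)
    have encinj[simp]: "enc v i = enc w j \<longleftrightarrow> v = w \<and> i = j" for v w i j
      by (auto simp: enc_def dest: inj_onD[OF inj_prod_encode, of "(v,i)" "(w,j)"])
    define VB where "VB = (\<lambda>(v,i). enc v i) ` (SIGMA v:V. {..<n v})"
    define EB where "EB = {(a,b). a \<in> VB \<and> b \<in> VB \<and> a \<noteq> b \<and> (p a = p b \<or> (p a, p b) \<in> E)}"
    have VBmem: "a \<in> VB \<longleftrightarrow> (\<exists>v i. a = enc v i \<and> v \<in> V \<and> i < n v)" for a
      by (auto simp: VB_def)
    have gB: "is_graph VB EB"
      unfolding is_graph_def
    proof (intro conjI)
      show "finite VB" unfolding VB_def using fV by auto
      show "EB \<subseteq> VB \<times> VB" by (auto simp: EB_def)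
      show "sym EB" using symE by (auto simp: EB_def sym_def)
      show "irrefl EB" by (auto simp: EB_def irrefl_def)
    qed
    have bl: "is_blowup V E VB EB"
      unfolding is_blowup_def
    proof (intro exI[of _ p] conjI ballI impI)
      show "p ` VB = V"
      proof
        show "p ` VB \<subseteq> V" by (auto simp: VBmem)
        show "V \<subseteq> p ` VB"
        proof
          fix v assume "v \<in> V"
          then have "enc v 0 \<in> VB" using npos[of v] by (auto simp: VBmem)
          then show "v \<in> p ` VB" by (metis image_eqI penc)
        qed
      qed
    qed (auto simp: EB_def)
    have GB: "(VB, EB) \<in> \<G>" using blowup_closed[OF G gB bl] .
    define SB where "SB = {a \<in> VB. p a \<in> S}"
    define EBS where "EBS = induced_edges EB SB"
    have SBV: "SB \<subseteq> VB" by (auto simp: SB_def)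
    have fSB: "finite SB" using gB SBV by (auto simp: is_graph_def intro: finite_subset)
    define k where "k = chromatic_number SB EBS"
    define wB where "wB = clique_number SB EBS"
    have chi: "real k \<le> c * real wB" unfolding k_def wB_def EBS_def using chi_bounded[OF GB SBV] .
    have wBM: "wB \<le> M"
      unfolding wB_def
    proof (rule clique_le[OF fSB])
      fix K assume KS: "K \<subseteq> SB" and cl: "is_clique EBS K"
      define P where "P = p ` K"
      have PS: "P \<subseteq> S" using KS by (auto simp: P_def SB_def)
      have fP: "finite P" using PS fS finite_subset by blast
      have clP: "is_clique ES P"
        unfolding is_clique_def
      proof (intro ballI impI)
        fix x y assume "x \<in> P" "y \<in> P" "x \<noteq> y"
        then obtain a b where ab: "a \<in> K" "b \<in> K" "x = p a" "y = p b" by (auto simp: P_def)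
        then have "a \<noteq> b" using \<open>x \<noteq> y\<close> by auto
        then have "(a, b) \<in> EB" using cl ab by (auto simp: is_clique_def EBS_def induced_edges_def)
        then show "(x, y) \<in> ES" using ab \<open>x \<noteq> y\<close> \<open>x \<in> P\<close> \<open>y \<in> P\<close> PS
          by (auto simp: EB_def ES_def induced_edges_def)
      qed
      have Ksub: "K \<subseteq> (\<lambda>(v,i). enc v i) ` (SIGMA v:P. {..<n v})"
      proof
        fix a assume "a \<in> K"
        then obtain v i where "a = enc v i" "i < n v" using KS by (auto simp: SB_def VBmem)
        then show "a \<in> (\<lambda>(v,i). enc v i) ` (SIGMA v:P. {..<n v})"
          using \<open>a \<in> K\<close> by (auto simp: P_def intro!: image_eqI[of _ _ "(v,i)"] image_eqI[of v p a])
      qed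
      have "card K \<le> card ((\<lambda>(v,i). enc v i) ` (SIGMA v:P. {..<n v}))"
        using Ksub fP by (intro card_mono) auto
      also have "\<dots> \<le> card (SIGMA v:P. {..<n v})" by (rule card_image_le) (use fP in auto)
      also have "\<dots> = (\<Sum>v\<in>P. n v)" using fP by (simp add: card_SigmaI)
      finally have cK: "card K \<le> (\<Sum>v\<in>P. n v)" .
      show "card K \<le> M"
      proof (cases "P = {}")
        case True
        then show ?thesis using cK by simp
      next
        case False
        have "(\<Sum>v\<in>P. n v) * card P = (\<Sum>v\<in>P. n v * card P)" by (simp add: sum_distrib_right)
        also have "\<dots> \<le> (\<Sum>v\<in>P. M)"
        proof (rule sum_mono)
          fix v assume vP: "v \<in> P"
          have "card P \<le> om v" unfolding om_def ES_def
            using local_omega_ge[OF fS PS _ vP] clP unfolding ES_def by blast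
          then have "n v * card P \<le> n v * om v" by (rule mult_le_mono2)
          also have "\<dots> = M" using nM vP PS by auto
          finally show "n v * card P \<le> M" .
        qed
        also have "\<dots> = M * card P" by simp
        finally have "(\<Sum>v\<in>P. n v) \<le> M" using False fP by (simp add: card_gt_0_iff)
        then show ?thesis using cK by linarith
      qed
    qed
    have ex: "\<exists>kk. \<exists>col :: nat \<Rightarrow> nat. (\<forall>v\<in>SB. col v < kk) \<and>
        (\<forall>u\<in>SB. \<forall>w\<in>SB. (u, w) \<in> EBS \<longrightarrow> col u \<noteq> col w)"
      by (intro exI[of _ "Suc (Max SB)"] exI[of _ id]) (auto simp: EBS_def EB_def induced_edges_def fSB le_imp_less_Suc)
    obtain col :: "nat \<Rightarrow> nat" where colk: "\<forall>v\<in>SB. col v < k"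
        and colp: "\<forall>u\<in>SB. \<forall>w\<in>SB. (u, w) \<in> EBS \<longrightarrow> col u \<noteq> col w"
      using LeastI_ex[OF ex] unfolding k_def chromatic_number_def by blast
    obtain v0 where v0: "v0 \<in> S" using Sne by blast
    have "enc v0 0 \<in> SB" using v0 SV npos[of v0] by (auto simp: SB_def VBmem)
    then have kpos: "k > 0" using colk by fastforce
    have cpos: "c > 0"
    proof (rule ccontr)
      assume "\<not> c > 0"
      then have "c * real wB \<le> 0" by (simp add: mult_nonpos_nonneg)
      then show False using chi kpos by linarith
    qed
    have kM: "real k \<le> c * real M"
      using chi wBM cpos by (meson mult_left_mono of_nat_le_iff order_trans less_imp_le)
    define fib where "fib = (\<lambda>v. (\<lambda>i. enc v i) ` {..<n v})"
    define \<phi> where "\<phi> = (\<lambda>v. \<Union>j\<in>col ` fib v. ivl k j)"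
    have fibSB: "fib v \<subseteq> SB" if "v \<in> S" for v
      using that SV by (auto simp: fib_def SB_def VBmem)
    have adj: "col a \<noteq> col b" if "a \<in> SB" "b \<in> SB" "a \<noteq> b" "p a = p b \<or> (p a, p b) \<in> E" for a b
      using colp that SBV by (auto simp: EBS_def EB_def induced_edges_def)
    show ?thesis
      unfolding f_coloring_def
    proof (intro exI[of _ \<phi>] conjI ballI impI)
      fix v assume vS: "v \<in> S"
      have fin: "finite (col ` fib v)" by (simp add: fib_def)
      have mm: "\<phi> v \<in> sets lebesgue \<and> measure lebesgue (\<phi> v) = real (card (col ` fib v)) / real k"
        unfolding \<phi>_def using ivl_union_meas[OF kpos fin] .
      then show "\<phi> v \<in> sets lebesgue" by blast
      show "\<phi> v \<subseteq> {0..1}"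
      proof
        fix x assume "x \<in> \<phi> v"
        then obtain a where a: "a \<in> fib v" "x \<in> ivl k (col a)" by (auto simp: \<phi>_def)
        have "col a < k" using colk fibSB[OF vS] a by auto
        then have "real (col a) + 1 \<le> real k" by linarith
        moreover have "real (col a) \<le> x * real k" "x * real k < real (col a) + 1"
          using a(2) kpos by (auto simp: ivl_def field_simps)
        ultimately have "0 \<le> x * real k" "x * real k \<le> 1 * real k" by linarith+
        then have "0 \<le> x" "x \<le> 1" using kpos
          by (simp_all add: zero_le_mult_iff mult_le_cancel_right)
        then show "x \<in> {0..1}" by simp
      qed
      have "inj_on col (fib v)"
      proof (rule inj_onI)
        fix a b assume ab: "a \<in> fib v" "b \<in> fib v" "col a = col b"
        then have "p a = p b" "a \<in> SB" "b \<in> SB" using fibSB[OF vS] by (auto simp: fib_def)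
        then show "a = b" using adj[of a b] ab(3) by blast
      qed
      then have "card (col ` fib v) = card (fib v)" by (rule card_image)
      also have "\<dots> = n v" unfolding fib_def by (subst card_image) (auto simp: inj_on_def)
      finally have cc: "card (col ` fib v) = n v" .
      have nMr: "real (n v) * real (om v) = real M" using nM[OF vS] by (metis of_nat_mult)
      have ompos: "real (om v) > 0" using omb[OF vS] by simp
      have npr: "real (n v) > 0" using npos[of v] by simp
      have "f v \<le> 1 / (c * real (om v))" using fb vS by (simp add: om_def ES_def)
      also have "\<dots> = real (n v) / (c * real M)" using nMr[symmetric] ompos npr cpos by (simp add: field_simps)
      also have "\<dots> \<le> real (n v) / real k"
        using kM kpos npr by (intro divide_left_mono) auto
      finally show "f v \<le> measure lebesgue (\<phi> v)" using mm cc by simp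
    next
      fix u w assume uS: "u \<in> S" and wS: "w \<in> S" and uw: "(u, w) \<in> induced_edges E S"
      then have uwE: "(u, w) \<in> E" by (simp add: induced_edges_def)
      then have "u \<noteq> w" using irrE by (auto simp: irrefl_def)
      have disj: "col a \<noteq> col b" if "a \<in> fib u" "b \<in> fib w" for a b
      proof -
        have "a \<in> SB" "b \<in> SB" using that fibSB[OF uS] fibSB[OF wS] by auto
        moreover have "p a = u" "p b = w" using that by (auto simp: fib_def)
        ultimately show ?thesis using adj[of a b] uwE \<open>u \<noteq> w\<close> by auto
      qed
      show "\<phi> u \<inter> \<phi> w = {}"
        unfolding \<phi>_def using ivl_disj[OF kpos] disj by blast
    qed
  qed
qed

end
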